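(* Let $k>0$ and $F_n(x,y;k)=\sum_{w\in B_n}x^{\mathrm{wexc}(w)}y^{\mathrm{aexc}(w)}k^{n-\mathrm{cyc}(w)}$ (with $F_0=1$). Then $$\sum_{n\ge0}F_n(x,y;k)\frac{z^n}{n!}=\left(\frac{(y-x)e^{kz(y-x)}}{y-xe^{2kz(y-x)}}\right)^{1/k}.$$
   Context: $B_n$ is the hyperoctahedral group of signed permutations $w$ of $\pm[n]$ with $w(-i)=-w(i)$, written in standard cycle decomposition (each cycle starts with its element of largest absolute value, cycles ordered by increasing absolute value of first elements); $\mathrm{cyc}(w)$ is the number of cycles. An index $i\in[n]$ is a weak excedance if $w(i)=i$ or $w(|w(i)|)>w(i)$, and an anti-excedance if $w(i)=-i$ or $w(|w(i)|)<w(i)$; $\mathrm{wexc}(w)$, $\mathrm{aexc}(w)$ denote their numbers. *)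

theory Defs
  imports "HOL-Computational_Algebra.Formal_Power_Series"
begin

definition pm_set :: "nat \<Rightarrow> int set" where
  "pm_set n = {i. 1 \<le> \<bar>i\<bar> \<and> \<bar>i\<bar> \<le> int n}"

text \<open>Hyperoctahedral group \<open>B_n\<close>: signed permutations of \<open>\<plusminus>[n]\<close>,
  extended by the identity outside \<open>\<plusminus>[n]\<close> (so that each element is a unique function).\<close>
definition signed_perms :: "nat \<Rightarrow> (int \<Rightarrow> int) set" where
  "signed_perms n = {w. bij_betw w (pm_set n) (pm_set n)
                        \<and> (\<forall>i \<in> pm_set n. w (- i) = - w i)
                        \<and> (\<forall>i. i \<notin> pm_set n \<longrightarrow> w i = i)}"

text \<open>Number of cycles in the standard cycle decomposition: the cycles are the cycles
  of the underlying permutation \<open>i \<mapsto> |w(i)|\<close> of \<open>[n]\<close> (signs are bars on entries).\<close>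
definition cyc :: "nat \<Rightarrow> (int \<Rightarrow> int) \<Rightarrow> nat" where
  "cyc n w = card ((\<lambda>i. {((\<lambda>j. \<bar>w j\<bar>) ^^ m) i | m. True}) ` {1..int n})"

definition wexc :: "nat \<Rightarrow> (int \<Rightarrow> int) \<Rightarrow> nat" where
  "wexc n w = card {i \<in> {1..int n}. w i = i \<or> w \<bar>w i\<bar> > w i}"

definition aexc :: "nat \<Rightarrow> (int \<Rightarrow> int) \<Rightarrow> nat" where
  "aexc n w = card {i \<in> {1..int n}. w i = - i \<or> w \<bar>w i\<bar> < w i}"

definition F_poly :: "nat \<Rightarrow> real \<Rightarrow> real \<Rightarrow> real \<Rightarrow> real" where
  "F_poly n x y k = (\<Sum>w \<in> signed_perms n. x ^ wexc n w * y ^ aexc n w * k ^ (n - cyc n w))"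

text \<open>Real power \<open>G^a\<close> of a formal power series with constant term 1:
  \<open>(1 + X)^a\<close> (the binomial series) composed with \<open>G - 1\<close>.\<close>
definition fps_powr1 :: "real fps \<Rightarrow> real \<Rightarrow> real fps" where
  "fps_powr1 G a = fps_binomial a oo (G - 1)"

end

theory Submission
  imports Defs
begin

unbundle fps_syntax



lemma fps_ode_unique:
  fixes f g R :: "real fps"
  assumes "fps_deriv f = R * f" "fps_deriv g = R * g" "f$0 = g$0"
  shows "f = g"
proof -
  have "\<forall>m\<le>n. f$m = g$m" for n
  proof (induction n)
    case 0 then show ?case using assms(3) by simp
  next
    case (Suc n)
    have "of_nat (n+1) * f$(n+1) = (R*f)$n" using arg_cong[OF assms(1), of "\<lambda>h. h$n"] by simp
    also have "\<dots> = (\<Sum>i=0..n. R$i * f$(n-i))" by (simp add: fps_mult_nth)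
    also have "\<dots> = (\<Sum>i=0..n. R$i * g$(n-i))" using Suc by (intro sum.cong) auto
    also have "\<dots> = (R*g)$n" by (simp add: fps_mult_nth)
    also have "\<dots> = of_nat (n+1) * g$(n+1)" using arg_cong[OF assms(2), of "\<lambda>h. h$n"] by simp
    finally have "f$(Suc n) = g$(Suc n)" by simp
    then show ?case using Suc by (auto simp: le_Suc_eq)
  qed
  then show ?thesis by (intro fps_ext) auto
qed

lemma fps_ode_unique':
  fixes f g N E :: "real fps"
  assumes "fps_deriv f * E = N * f" "fps_deriv g * E = N * g" "f$0 = g$0" "E$0 \<noteq> 0"
  shows "f = g"
proof -
  have EE: "E * inverse E = 1" using assms(4) by (simp add: inverse_mult_eq_1')
  have "fps_deriv f = (N * inverse E) * f"
  proof -
    have "fps_deriv f = fps_deriv f * (E * inverse E)" using EE by simp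
    also have "\<dots> = (fps_deriv f * E) * inverse E" by (simp add: mult.assoc)
    also have "\<dots> = (N * inverse E) * f" using assms(1) by (simp add: ac_simps)
    finally show ?thesis .
  qed
  moreover have "fps_deriv g = (N * inverse E) * g"
  proof -
    have "fps_deriv g = fps_deriv g * (E * inverse E)" using EE by simp
    also have "\<dots> = (fps_deriv g * E) * inverse E" by (simp add: mult.assoc)
    also have "\<dots> = (N * inverse E) * g" using assms(2) by (simp add: ac_simps)
    finally show ?thesis .
  qed
  ultimately show ?thesis using fps_ode_unique assms(3) by blast
qed

lemma div_times_cancel:
  fixes f g :: "real fps"
  assumes "g$0 \<noteq> 0"
  shows "f / g * g = f"
  using assms by (simp add: fps_divide_unit inverse_mult_eq_1 mult.assoc)

lemma compose_binomial_deriv: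
  fixes G :: "real fps"
  assumes "G$0 = 1"
  shows "fps_deriv (fps_binomial a oo (G - 1)) * G = fps_const a * (fps_binomial a oo (G - 1)) * fps_deriv G"
proof -
  have g0: "(G - 1)$0 = 0" using assms by simp
  have d: "fps_deriv (fps_binomial a) * (1 + fps_X) = fps_const a * fps_binomial a"
    by (subst fps_binomial_deriv) (rule div_times_cancel, simp)
  have "fps_deriv (fps_binomial a oo (G - 1)) = (fps_deriv (fps_binomial a) oo (G - 1)) * fps_deriv G"
    using fps_compose_deriv[OF g0] by simp
  moreover have "(fps_deriv (fps_binomial a) oo (G - 1)) * G = fps_const a * (fps_binomial a oo (G - 1))"
  proof -
    have "(1 + fps_X) oo (G - 1) = G" using g0 by (simp add: fps_compose_add_distrib)
    then have "(fps_deriv (fps_binomial a) oo (G - 1)) * G = (fps_deriv (fps_binomial a) * (1 + fps_X)) oo (G - 1)"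
      by (simp add: fps_compose_mult_distrib[OF g0])
    also have "\<dots> = fps_const a * (fps_binomial a oo (G - 1))"
      unfolding d by (simp add: fps_compose_mult_distrib[OF g0])
    finally show ?thesis .
  qed
  ultimately show ?thesis by (simp add: ac_simps)
qed

lemma RHS_eq_Phi:
  fixes x y k :: real
  assumes kpos: "k > 0" and xy: "x \<noteq> y"
  defines "d \<equiv> y - x"
  defines "Q \<equiv> fps_const y - fps_const x * fps_exp (2*k*d)"
  defines "G \<equiv> fps_const d * fps_exp (k*d) / Q"
  defines "B \<equiv> fps_const (-x/d) * (fps_exp (2*k*d) - 1)"
  shows "fps_binomial (1/k) oo (G - 1) = fps_exp d * (fps_binomial (-(1/k)) oo B)"
proof -
  have d0: "d \<noteq> 0" using xy unfolding d_def by simp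
  have Q0: "Q$0 = d" unfolding Q_def d_def by simp
  have GQ: "G * Q = fps_const d * fps_exp (k*d)"
    unfolding G_def using Q0 d0 by (intro div_times_cancel) simp
  have B1: "1 + B = fps_const (1/d) * Q"
  proof (rule fps_ext)
    fix n show "(1 + B)$n = (fps_const (1/d) * Q)$n"
      using d0 by (cases "n = 0") (auto simp: B_def Q_def d_def field_simps)
  qed
  define E where "E = fps_exp (k*d)"
  have GB: "G * (1 + B) = E"
  proof -
    have c1: "fps_const (1/d) * fps_const d = 1" using d0 by simp
    have "G * (1 + B) = fps_const (1/d) * (G * Q)" unfolding B1 by (simp add: ac_simps)
    also have "\<dots> = (fps_const (1/d) * fps_const d) * E" unfolding GQ E_def by (simp add: mult.assoc)
    finally show ?thesis unfolding c1 by simp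
  qed
  have G0: "G$0 = 1"
  proof -
    have "(G * Q)$0 = d" unfolding GQ by simp
    then have "G$0 * d = d" using Q0 by simp
    then show ?thesis using d0 by simp
  qed
  have B0: "B$0 = 0" unfolding B_def by simp
  have E0: "E$0 \<noteq> 0" unfolding E_def by simp
  have dGB: "fps_deriv G * (1 + B) + G * fps_deriv B = fps_const (k*d) * E"
  proof -
    have "fps_deriv (G * (1 + B)) = fps_const (k*d) * E" unfolding GB E_def by simp
    then show ?thesis by (simp add: algebra_simps)
  qed
  define H where "H = fps_binomial (1/k) oo (G - 1)"
  define P where "P = fps_binomial (-(1/k)) oo B"
  define Phi where "Phi = fps_exp d * P"
  define N where "N = fps_const (1/k) * fps_deriv G * (1 + B)"
  have hH: "fps_deriv H * G = fps_const (1/k) * H * fps_deriv G"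
    unfolding H_def by (rule compose_binomial_deriv[OF G0])
  have hP: "fps_deriv P * (1 + B) = fps_const (-(1/k)) * P * fps_deriv B"
  proof -
    have "(1 + B)$0 = 1" using B0 by simp
    then have "fps_deriv (fps_binomial (-(1/k)) oo ((1 + B) - 1)) * (1 + B) =
        fps_const (-(1/k)) * (fps_binomial (-(1/k)) oo ((1 + B) - 1)) * fps_deriv (1 + B)"
      by (rule compose_binomial_deriv)
    then show ?thesis unfolding P_def by simp
  qed
  have ode1: "fps_deriv H * E = N * H"
  proof -
    have "fps_deriv H * E = (fps_deriv H * G) * (1 + B)" unfolding GB[symmetric] by (simp add: mult.assoc)
    also have "\<dots> = N * H" unfolding hH N_def by (simp add: ac_simps)
    finally show ?thesis .
  qed
  have ode2: "fps_deriv Phi * E = N * Phi"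
  proof -
    have dPhi: "fps_deriv Phi = fps_const d * Phi + fps_exp d * fps_deriv P"
      unfolding Phi_def by (simp add: algebra_simps)
    have "fps_deriv Phi * E = fps_const d * Phi * G * (1 + B) + fps_exp d * G * (fps_deriv P * (1 + B))"
      unfolding dPhi GB[symmetric] by (simp add: algebra_simps)
    also have "\<dots> = fps_const d * Phi * G * (1 + B) - fps_const (1/k) * Phi * G * fps_deriv B"
      unfolding hP Phi_def by (simp add: algebra_simps fps_const_neg[symmetric] del: fps_const_neg)
    also have "\<dots> = Phi * (fps_const d * (G * (1 + B)) - fps_const (1/k) * (G * fps_deriv B))"
      by (simp add: algebra_simps)
    also have "fps_const d * (G * (1 + B)) = fps_const (1/k) * (fps_const (k*d) * E)"
    proof -
      have c2: "fps_const (1/k) * fps_const k = 1" using kpos by simp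
      have "fps_const (1/k) * (fps_const (k*d) * E) = (fps_const (1/k) * fps_const k) * (fps_const d * E)"
        by (simp add: ac_simps)
      then show ?thesis unfolding GB c2 using kpos by simp
    qed
    also have "\<dots> = fps_const (1/k) * (fps_deriv G * (1 + B) + G * fps_deriv B)"
      unfolding dGB ..
    also have "Phi * (\<dots> - fps_const (1/k) * (G * fps_deriv B)) = N * Phi"
      unfolding N_def by (simp add: algebra_simps)
    finally show ?thesis .
  qed
  have "H = Phi"
    by (rule fps_ode_unique'[OF ode1 ode2 _ E0]) (simp add: H_def Phi_def P_def B0)
  then show ?thesis unfolding H_def Phi_def P_def .
qed

definition Ej :: "real \<Rightarrow> nat \<Rightarrow> real fps" where
  "Ej c j = fps_exp 1 * (fps_exp c - 1)^j"

definition Wc :: "real \<Rightarrow> nat \<Rightarrow> nat \<Rightarrow> real" where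
  "Wc c n j = fact n * (Ej c j $ n)"

definition alph :: "real \<Rightarrow> nat \<Rightarrow> real" where
  "alph k j = (-1)^j * ((-(1/k)) gchoose j)"

definition Uc :: "real \<Rightarrow> nat \<Rightarrow> nat \<Rightarrow> real" where
  "Uc k n j = alph k j * Wc (2*k) n j"

definition Mp :: "real \<Rightarrow> real \<Rightarrow> nat \<Rightarrow> real \<Rightarrow> real" where
  "Mp k y n x = (\<Sum>j\<le>n. Uc k n j * x^j * (y-x)^(n-j))"

lemma compose_nth_ext:
  fixes a b :: "real fps"
  assumes "b$0 = 0" "i \<le> n"
  shows "(a oo b)$i = (\<Sum>j\<le>n. a$j * (b^j)$i)"
proof -
  have "(a oo b)$i = (\<Sum>j\<in>{0..i}. a$j * (b^j)$i)" by (simp add: fps_compose_nth)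
  also have "\<dots> = (\<Sum>j\<le>n. a$j * (b^j)$i)"
  proof (rule sum.mono_neutral_left)
    show "\<forall>j\<in>{..n} - {0..i}. a $ j * (b ^ j) $ i = 0"
      using startsby_zero_power_prefix[OF assms(1)] by auto
  qed (use assms in auto)
  finally show ?thesis .
qed

lemma mult_compose_nth:
  fixes a b e :: "real fps"
  assumes "b$0 = 0"
  shows "(e * (a oo b))$n = (\<Sum>j\<le>n. a$j * (e * b^j)$n)"
proof -
  have "(e * (a oo b))$n = (\<Sum>i=0..n. e$i * (a oo b)$(n-i))" by (simp add: fps_mult_nth)
  also have "\<dots> = (\<Sum>i=0..n. e$i * (\<Sum>j\<le>n. a$j * (b^j)$(n-i)))"
    using compose_nth_ext[OF assms] by (intro sum.cong) auto
  also have "\<dots> = (\<Sum>j\<le>n. a$j * (\<Sum>i=0..n. e$i * (b^j)$(n-i)))"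
    by (simp add: sum_distrib_left sum_distrib_right sum.swap[of _ "{0..n}"] ac_simps)
  also have "\<dots> = (\<Sum>j\<le>n. a$j * (e * b^j)$n)" by (simp add: fps_mult_nth)
  finally show ?thesis .
qed

lemma Ej_scale:
  "(fps_exp d * (fps_exp (c*d) - 1)^j) $ n = d^n * (Ej c j $ n)"
proof -
  have l0: "(fps_const d * fps_X :: real fps)$0 = 0" by simp
  have "Ej c j oo (fps_const d * fps_X) = fps_exp d * (fps_exp (c*d) - 1)^j"
  proof -
    have "(fps_exp c - 1)^j oo (fps_const d * fps_X) = ((fps_exp c - 1) oo (fps_const d * fps_X))^j"
      by (simp add: fps_compose_power[OF l0])
    also have "(fps_exp c - 1) oo (fps_const d * fps_X) = fps_exp (d*c) - 1"
      by (simp add: fps_compose_sub_distrib)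
    finally have "(fps_exp c - 1)^j oo (fps_const d * fps_X) = (fps_exp (c*d) - 1)^j" by (simp add: mult.commute)
    then show ?thesis unfolding Ej_def by (simp add: fps_compose_mult_distrib[OF l0])
  qed
  then have "(fps_exp d * (fps_exp (c*d) - 1)^j) $ n = (Ej c j oo (fps_const d * fps_X)) $ n" by simp
  also have "\<dots> = d^n * (Ej c j $ n)" by (simp add: fps_compose_linear)
  finally show ?thesis .
qed

lemma t1: fixes x d :: real assumes "d \<noteq> 0" "j \<le> n"
  shows "(-x/d)^j * (d^n * e) = (-1)^j * x^j * d^(n-j) * e"
proof -
  have "d^n = d^j * d^(n-j)" using assms by (simp add: power_add[symmetric])
  moreover have "(-x/d)^j = (-1)^j * x^j / d^j" by (metis minus_divide_left power_divide power_minus)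
  ultimately show ?thesis using assms by simp
qed
lemma t2: fixes g e x y :: real
  shows "g * ((-1)^j * x^j * (y-x)^(n-j) * e) = ((-1)^j * g) * (fact n * e) * x^j * (y-x)^(n-j) / fact n"
  by simp

lemma Phi_nth:
  fixes x y k :: real
  assumes xy: "x \<noteq> y"
  defines "d \<equiv> y - x"
  defines "B \<equiv> fps_const (-x/d) * (fps_exp (2*k*d) - 1)"
  shows "(fps_exp d * (fps_binomial (-(1/k)) oo B)) $ n = Mp k y n x / fact n"
proof -
  have d0: "d \<noteq> 0" using xy unfolding d_def by simp
  have B0: "B$0 = 0" unfolding B_def by simp
  have "(fps_exp d * (fps_binomial (-(1/k)) oo B)) $ n
      = (\<Sum>j\<le>n. ((-(1/k)) gchoose j) * (fps_exp d * B^j)$n)"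
    by (simp add: mult_compose_nth[OF B0])
  also have "\<dots> = (\<Sum>j\<le>n. Uc k n j * x^j * (y-x)^(n-j) / fact n)"
  proof (rule sum.cong[OF refl])
    fix j assume j: "j \<in> {..n}"
    have "fps_exp d * B^j = fps_const ((-x/d)^j) * (fps_exp d * (fps_exp ((2*k)*d) - 1)^j)"
      unfolding B_def by (simp add: power_mult_distrib fps_const_power ac_simps)
    then have "(fps_exp d * B^j)$n = (-x/d)^j * ((fps_exp d * (fps_exp ((2*k)*d) - 1)^j) $ n)"
      by (simp only: fps_mult_left_const_nth)
    then have "(fps_exp d * B^j)$n = (-x/d)^j * (d^n * (Ej (2*k) j $ n))"
      by (simp only: Ej_scale)
    also have "\<dots> = (-1)^j * x^j * d^(n-j) * (Ej (2*k) j $ n)"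
      using t1 d0 j by simp
    finally have "((-(1/k)) gchoose j) * (fps_exp d * B^j)$n = ((-(1/k)) gchoose j) * ((-1)^j * x^j * (y-x)^(n-j) * (Ej (2*k) j $ n))"
      unfolding d_def by simp
    also have "\<dots> = ((-1)^j * ((-(1/k)) gchoose j)) * (fact n * (Ej (2*k) j $ n)) * x^j * (y-x)^(n-j) / fact n"
      by (rule t2)
    finally show "((-(1/k)) gchoose j) * (fps_exp d * B^j)$n = Uc k n j * x^j * (y-x)^(n-j) / fact n"
      unfolding Uc_def alph_def Wc_def .
  qed
  also have "\<dots> = Mp k y n x / fact n" by (simp add: Mp_def sum_divide_distrib)
  finally show ?thesis .
qed

lemma Ej_deriv:
  "fps_deriv (Ej c (Suc j)) = fps_const (1 + c * of_nat (Suc j)) * Ej c (Suc j) + fps_const (c * of_nat (Suc j)) * Ej c j"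
proof -
  define A where "A = fps_exp c - (1::real fps)"
  have eA: "fps_exp c = A + 1" unfolding A_def by simp
  have "fps_deriv (Ej c (Suc j)) = fps_exp 1 * A^Suc j + fps_exp 1 * (fps_const (of_nat (Suc j)) * (fps_const c * fps_exp c) * A^j)"
    unfolding Ej_def A_def[symmetric] by (simp add: fps_deriv_power A_def del: power_Suc of_nat_Suc)
  also have "\<dots> = fps_exp 1 * A^Suc j + fps_const (c * of_nat (Suc j)) * (fps_exp 1 * A^j * (A + 1))"
    unfolding eA[symmetric] by (simp add: ac_simps)
  also have "\<dots> = fps_const (1 + c * of_nat (Suc j)) * (fps_exp 1 * A^Suc j) + fps_const (c * of_nat (Suc j)) * (fps_exp 1 * A^j)"
  proof -
    have e: "fps_const (1 + c * of_nat (Suc j)) = 1 + fps_const (c * of_nat (Suc j))"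
      by (metis fps_const_1_eq_1 fps_const_add)
    show ?thesis unfolding e by (simp add: algebra_simps del: of_nat_Suc)
  qed
  finally show ?thesis unfolding Ej_def A_def .
qed

lemma Wc_rec: "Wc c (Suc n) (Suc j) = (1 + c * of_nat (Suc j)) * Wc c n (Suc j) + c * of_nat (Suc j) * Wc c n j"
proof -
  have "Wc c (Suc n) (Suc j) = fact n * (fps_deriv (Ej c (Suc j)) $ n)"
    unfolding Wc_def by (simp add: algebra_simps del: of_nat_Suc)
  also have "\<dots> = (1 + c * of_nat (Suc j)) * Wc c n (Suc j) + c * of_nat (Suc j) * Wc c n j"
    unfolding Ej_deriv Wc_def by (simp add: algebra_simps del: of_nat_Suc)
  finally show ?thesis .
qed

lemma Wc_0: "Wc c n 0 = 1"
  unfolding Wc_def Ej_def by simp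

lemma Wc_zero: "n < j \<Longrightarrow> Wc c n j = 0"
proof -
  assume nj: "n < j"
  have z: "\<forall>i<j. ((fps_exp c - 1)^j) $ i = (0::real)"
    by (rule startsby_zero_power_prefix) simp
  have "Ej c j $ n = (\<Sum>i=0..n. fps_exp 1 $ i * ((fps_exp c - 1)^j) $ (n - i))"
    unfolding Ej_def fps_mult_nth ..
  also have "\<dots> = 0" using z nj by (intro sum.neutral) auto
  finally show ?thesis unfolding Wc_def by simp
qed

lemma alph_rec:
  assumes "k > 0"
  shows "alph k (Suc j) * (2 * k * of_nat (Suc j)) = alph k j * (2 * (1 + k * of_nat j))"
proof -
  define a where "a = -(1/k)"
  have "fact (Suc j) * (a gchoose Suc j) = (\<Prod>i = 0..<Suc j. a - of_nat i)"
    by (rule gbinomial_mult_fact)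
  also have "\<dots> = (\<Prod>i = 0..<j. a - of_nat i) * (a - of_nat j)" by simp
  also have "(\<Prod>i = 0..<j. a - of_nat i) = fact j * (a gchoose j)" by (rule gbinomial_mult_fact[symmetric])
  finally have "fact (Suc j) * (a gchoose Suc j) = fact j * (a gchoose j) * (a - of_nat j)" .
  then have "fact j * (of_nat (Suc j) * (a gchoose Suc j)) = fact j * ((a gchoose j) * (a - of_nat j))"
    by (simp only: fact_Suc of_nat_mult mult.assoc mult.commute mult.left_commute)
  then have e: "of_nat (Suc j) * (a gchoose Suc j) = (a gchoose j) * (a - of_nat j)"
    by (subst (asm) mult_left_cancel) auto
  have "alph k (Suc j) * (2 * k * of_nat (Suc j)) = (-1)^Suc j * 2 * k * (of_nat (Suc j) * (a gchoose Suc j))"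
    unfolding alph_def a_def by (simp add: ac_simps del: of_nat_Suc)
  also have "\<dots> = (-1)^j * (a gchoose j) * (2 * k * (of_nat j - a))" unfolding e by (simp add: algebra_simps)
  also have "2 * k * (of_nat j - a) = 2 * (1 + k * of_nat j)" unfolding a_def using assms by (simp add: field_simps)
  finally show ?thesis unfolding alph_def a_def by (simp add: ac_simps)
qed

lemma Uc_rec:
  assumes "k > 0"
  shows "Uc k (Suc n) (Suc j) = (1 + 2 * k * of_nat (Suc j)) * Uc k n (Suc j) + 2 * (1 + k * of_nat j) * Uc k n j"
proof -
  have "Uc k (Suc n) (Suc j) = (1 + 2*k * of_nat (Suc j)) * Uc k n (Suc j) + alph k (Suc j) * (2 * k * of_nat (Suc j)) * Wc (2*k) n j"
    unfolding Uc_def Wc_rec by (simp add: algebra_simps del: of_nat_Suc)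
  also have "\<dots> = (1 + 2 * k * of_nat (Suc j)) * Uc k n (Suc j) + 2 * (1 + k * of_nat j) * Uc k n j"
    unfolding alph_rec[OF assms] Uc_def by (simp add: ac_simps)
  finally show ?thesis .
qed

lemma Uc_0: "Uc k n 0 = 1"
  unfolding Uc_def alph_def Wc_0 by simp

lemma Uc_zero: "n < j \<Longrightarrow> Uc k n j = 0"
  unfolding Uc_def using Wc_zero by simp

definition Md :: "real \<Rightarrow> real \<Rightarrow> nat \<Rightarrow> real \<Rightarrow> real" where
  "Md k y m x = (\<Sum>j\<le>m. Uc k m j * (of_nat j * x^(j-1) * (y-x)^(m-j) - of_nat (m-j) * x^j * (y-x)^(m-j-1)))"

lemma Mp_deriv: "(Mp k y m has_real_derivative Md k y m x) (at x)"
  unfolding Mp_def[abs_def] Md_def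
  by (auto intro!: derivative_eq_intros sum.cong simp: algebra_simps)

lemma term_id:
  fixes x y k :: real
  assumes "j \<le> m"
  shows "(x + y + 2*k*of_nat m*x) * (x^j*(y-x)^(m-j))
       + 2*k*(y-x)*(x*(of_nat j * x^(j-1) * (y-x)^(m-j) - of_nat (m-j) * x^j * (y-x)^(m-j-1)))
     = (1 + 2*k*of_nat j) * (x^j * (y-x)^(Suc m - j)) + 2*(1 + k*of_nat j) * (x^(Suc j) * (y-x)^(m-j))"
proof -
  obtain r where r: "m = j + r" using assms by (metis le_add_diff_inverse)
  have a: "x * (of_nat j * x^(j-1)) = of_nat j * x^j" by (cases j) auto
  have b: "(y-x) * (of_nat r * (y-x)^(r-1)) = of_nat r * (y-x)^r" by (cases r) auto
  have "2*k*(y-x)*(x*(of_nat j * x^(j-1) * (y-x)^r - of_nat r * x^j * (y-x)^(r-1)))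
      = 2*k*(y-x)^r*(y-x)*(x * (of_nat j * x^(j-1))) - 2*k*x*x^j*((y-x) * (of_nat r * (y-x)^(r-1)))"
    by (simp add: algebra_simps)
  also have "\<dots> = 2*k*(y-x)^r*(y-x)*(of_nat j * x^j) - 2*k*x*x^j*(of_nat r * (y-x)^r)"
    unfolding a b ..
  finally have c: "2*k*(y-x)*(x*(of_nat j * x^(j-1) * (y-x)^r - of_nat r * x^j * (y-x)^(r-1)))
      = 2*k*(y-x)^r*(y-x)*(of_nat j * x^j) - 2*k*x*x^j*(of_nat r * (y-x)^r)" .
  have "Suc m - j = Suc r" using r by simp
  then show ?thesis using r c by (simp add: algebra_simps)
qed

lemma Mp_step:
  fixes x y k :: real
  assumes kpos: "k > 0"
  shows "Mp k y (Suc m) x = (x + y + 2*k*of_nat m*x) * Mp k y m x + 2*k*(y-x)*(x * Md k y m x)"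
proof -
  define d where "d = y - x"
  define f1 where "f1 j = (1 + 2*k*of_nat j) * Uc k m j * x^j * d^(Suc m - j)" for j
  define f2 where "f2 j = 2*(1 + k*of_nat j) * Uc k m j * x^(Suc j) * d^(m - j)" for j
  have "Mp k y (Suc m) x = (\<Sum>j\<le>Suc m. Uc k (Suc m) j * x^j * d^(Suc m - j))"
    unfolding Mp_def d_def ..
  also have "\<dots> = Uc k (Suc m) 0 * d^(Suc m) + (\<Sum>i\<le>m. Uc k (Suc m) (Suc i) * x^(Suc i) * d^(m - i))"
    unfolding sum.atMost_Suc_shift by simp
  also have "\<dots> = f1 0 + (\<Sum>i\<le>m. f1 (Suc i)) + (\<Sum>i\<le>m. f2 i)"
  proof -
    have "(\<Sum>i\<le>m. Uc k (Suc m) (Suc i) * x^(Suc i) * d^(m - i)) = (\<Sum>i\<le>m. f1 (Suc i) + f2 i)"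
    proof (intro sum.cong refl)
      fix i
      show "Uc k (Suc m) (Suc i) * x^(Suc i) * d^(m - i) = f1 (Suc i) + f2 i"
        unfolding Uc_rec[OF kpos] f1_def f2_def by (simp only: diff_Suc_Suc ring_distribs mult.assoc)
    qed
    moreover have "Uc k (Suc m) 0 * d^(Suc m) = f1 0" unfolding f1_def Uc_0 by simp
    ultimately show ?thesis by (simp add: sum.distrib)
  qed
  also have "f1 0 + (\<Sum>i\<le>m. f1 (Suc i)) = (\<Sum>j\<le>Suc m. f1 j)"
    unfolding sum.atMost_Suc_shift ..
  also have "\<dots> = (\<Sum>j\<le>m. f1 j)"
    by (simp add: f1_def Uc_zero del: power_Suc)
  also have "(\<Sum>j\<le>m. f1 j) + (\<Sum>i\<le>m. f2 i) = (\<Sum>j\<le>m. Uc k m j * ((1 + 2*k*of_nat j) * (x^j * d^(Suc m - j)) + 2*(1 + k*of_nat j) * (x^(Suc j) * d^(m-j))))"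
    unfolding f1_def f2_def sum.distrib[symmetric] by (intro sum.cong) (simp_all only: ring_distribs mult.assoc mult.left_commute mult.commute)
  also have "\<dots> = (\<Sum>j\<le>m. Uc k m j * ((x + y + 2*k*of_nat m*x) * (x^j*(y-x)^(m-j))
       + 2*k*(y-x)*(x*(of_nat j * x^(j-1) * (y-x)^(m-j) - of_nat (m-j) * x^j * (y-x)^(m-j-1)))))"
    unfolding d_def
  proof (intro sum.cong refl)
    fix j assume "j \<in> {..m}"
    then have jm: "j \<le> m" by simp
    show "Uc k m j * ((1 + 2*k*of_nat j) * (x^j * (y-x)^(Suc m - j)) + 2*(1 + k*of_nat j) * (x^(Suc j) * (y-x)^(m-j))) =
      Uc k m j * ((x + y + 2*k*of_nat m*x) * (x^j*(y-x)^(m-j))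
       + 2*k*(y-x)*(x*(of_nat j * x^(j-1) * (y-x)^(m-j) - of_nat (m-j) * x^j * (y-x)^(m-j-1))))"
      by (simp only: term_id[OF jm])
  qed
  also have "\<dots> = (x + y + 2*k*of_nat m*x) * Mp k y m x + 2*k*(y-x)*(x * Md k y m x)"
  proof -
    define c where "c = x + y + 2*k*of_nat m*x"
    define e where "e = 2*k*(y-x)"
    define P where "P j = x^j*(y-x)^(m-j)" for j
    define D where "D j = of_nat j * x^(j-1) * (y-x)^(m-j) - of_nat (m-j) * x^j * (y-x)^(m-j-1)" for j
    have 1: "c * Mp k y m x = (\<Sum>j\<le>m. c * (Uc k m j * P j))"
      unfolding Mp_def P_def sum_distrib_left by (simp add: mult.assoc)
    have 2: "e * (x * Md k y m x) = (\<Sum>j\<le>m. e * (x * (Uc k m j * D j)))"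
      unfolding Md_def D_def sum_distrib_left ..
    have "(\<Sum>j\<le>m. Uc k m j * (c * P j + e * (x * D j))) = (\<Sum>j\<le>m. c * (Uc k m j * P j) + e * (x * (Uc k m j * D j)))"
      by (intro sum.cong refl) (simp only: ring_distribs mult.assoc mult.left_commute)
    also have "\<dots> = c * Mp k y m x + e * (x * Md k y m x)" unfolding 1 2 sum.distrib ..
    finally show ?thesis unfolding c_def e_def P_def D_def .
  qed
  finally show ?thesis .
qed


lemma pm_iff: "i \<in> pm_set n \<longleftrightarrow> 1 \<le> \<bar>i\<bar> \<and> \<bar>i\<bar> \<le> int n"
  unfolding pm_set_def by simp

lemma SP_char:
  "w \<in> signed_perms n \<longleftrightarrow> (\<forall>i. i \<notin> pm_set n \<longrightarrow> w i = i) \<and> (\<forall>i\<in>pm_set n. w (-i) = - w i)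
     \<and> (\<forall>i\<in>{1..int n}. w i \<in> pm_set n) \<and> inj_on (\<lambda>i. \<bar>w i\<bar>) {1..int n}"
proof
  assume w: "w \<in> signed_perms n"
  then have b: "bij_betw w (pm_set n) (pm_set n)" and a: "\<forall>i \<in> pm_set n. w (- i) = - w i"
    and o: "\<forall>i. i \<notin> pm_set n \<longrightarrow> w i = i" unfolding signed_perms_def by auto
  have m: "\<forall>i\<in>{1..int n}. w i \<in> pm_set n" using b unfolding bij_betw_def by (auto simp: pm_iff)
  have "inj_on (\<lambda>i. \<bar>w i\<bar>) {1..int n}"
  proof (rule inj_onI)
    fix i j assume i: "i \<in> {1..int n}" and j: "j \<in> {1..int n}" and e: "\<bar>w i\<bar> = \<bar>w j\<bar>"
    have ip: "i \<in> pm_set n" "-j \<in> pm_set n" "j \<in> pm_set n" using i j by (auto simp: pm_iff)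
    from e have "w i = w j \<or> w i = - w j" by auto
    then show "i = j"
    proof
      assume "w i = w j" then show ?thesis using b ip unfolding bij_betw_def inj_on_def by blast
    next
      assume "w i = - w j" then have "w i = w (-j)" using a ip by simp
      then have "i = -j" using b ip unfolding bij_betw_def inj_on_def by blast
      then show ?thesis using i j by simp
    qed
  qed
  then show "(\<forall>i. i \<notin> pm_set n \<longrightarrow> w i = i) \<and> (\<forall>i\<in>pm_set n. w (-i) = - w i)
     \<and> (\<forall>i\<in>{1..int n}. w i \<in> pm_set n) \<and> inj_on (\<lambda>i. \<bar>w i\<bar>) {1..int n}"
    using a o m by blast
next
  assume H: "(\<forall>i. i \<notin> pm_set n \<longrightarrow> w i = i) \<and> (\<forall>i\<in>pm_set n. w (-i) = - w i)
     \<and> (\<forall>i\<in>{1..int n}. w i \<in> pm_set n) \<and> inj_on (\<lambda>i. \<bar>w i\<bar>) {1..int n}"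
  then have o: "\<forall>i. i \<notin> pm_set n \<longrightarrow> w i = i" and a: "\<forall>i\<in>pm_set n. w (-i) = - w i"
    and m: "\<forall>i\<in>{1..int n}. w i \<in> pm_set n" and inj: "inj_on (\<lambda>i. \<bar>w i\<bar>) {1..int n}" by auto
  have m2: "w i \<in> pm_set n" if "i \<in> pm_set n" for i
  proof (cases "i > 0")
    case True then show ?thesis using m that by (auto simp: pm_iff)
  next
    case False
    then have "-i \<in> {1..int n}" using that by (auto simp: pm_iff)
    then have "w (-i) \<in> pm_set n" using m by auto
    moreover have "w (-i) = - w i" using a that by auto
    ultimately show ?thesis by (auto simp: pm_iff)
  qed
  have abs_eq: "\<bar>w i\<bar> = \<bar>w \<bar>i\<bar>\<bar>" if "i \<in> pm_set n" for i
    using a that by (cases "i \<ge> 0") (auto simp: pm_iff)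
  have injw: "inj_on w (pm_set n)"
  proof (rule inj_onI)
    fix i j assume i: "i \<in> pm_set n" and j: "j \<in> pm_set n" and e: "w i = w j"
    have "\<bar>w \<bar>i\<bar>\<bar> = \<bar>w \<bar>j\<bar>\<bar>" using abs_eq[OF i] abs_eq[OF j] e by simp
    moreover have "\<bar>i\<bar> \<in> {1..int n}" "\<bar>j\<bar> \<in> {1..int n}" using i j by (auto simp: pm_iff)
    ultimately have ij: "\<bar>i\<bar> = \<bar>j\<bar>" using inj unfolding inj_on_def by blast
    show "i = j"
    proof (rule ccontr)
      assume "i \<noteq> j"
      then have "i = -j" using ij by auto
      then have "w i = - w j" using a j by simp
      then have "w j = 0" using e by simp
      then show False using m2[OF j] by (simp add: pm_iff)
    qed
  qed
  have fin: "finite (pm_set n)" unfolding pm_set_def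
    by (rule finite_subset[of _ "{-int n..int n}"]) auto
  have "w ` pm_set n = pm_set n"
    using endo_inj_surj[OF fin _ injw] m2 by blast
  then have "bij_betw w (pm_set n) (pm_set n)" using injw unfolding bij_betw_def by blast
  then show "w \<in> signed_perms n" unfolding signed_perms_def using o a by blast
qed

lemma sp_out: "w \<in> signed_perms n \<Longrightarrow> i \<notin> pm_set n \<Longrightarrow> w i = i"
  by (auto simp: SP_char)

lemma sp_out': "w \<in> signed_perms n \<Longrightarrow> \<not> (1 \<le> \<bar>i\<bar> \<and> \<bar>i\<bar> \<le> int n) \<Longrightarrow> w i = i"
  by (auto simp: SP_char pm_iff)

lemma sp_neg: "w \<in> signed_perms n \<Longrightarrow> w (-i) = - w i"
proof -
  assume w: "w \<in> signed_perms n"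
  show ?thesis
  proof (cases "i \<in> pm_set n")
    case True then show ?thesis using w by (auto simp: SP_char)
  next
    case False
    then have "-i \<notin> pm_set n" by (auto simp: pm_iff)
    then show ?thesis using False w by (auto simp: SP_char)
  qed
qed

lemma sp_range: "w \<in> signed_perms n \<Longrightarrow> 1 \<le> i \<Longrightarrow> i \<le> int n \<Longrightarrow> 1 \<le> \<bar>w i\<bar> \<and> \<bar>w i\<bar> \<le> int n"
  by (auto simp: SP_char pm_iff)

lemma sp_inj: "w \<in> signed_perms n \<Longrightarrow> 1 \<le> i \<Longrightarrow> i \<le> int n \<Longrightarrow> 1 \<le> j \<Longrightarrow> j \<le> int n \<Longrightarrow> \<bar>w i\<bar> = \<bar>w j\<bar> \<Longrightarrow> i = j"
  by (auto simp: SP_char inj_on_def)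

lemma sp_bij: "w \<in> signed_perms n \<Longrightarrow> bij_betw (\<lambda>i. \<bar>w i\<bar>) {1..int n} {1..int n}"
proof -
  assume w: "w \<in> signed_perms n"
  have inj: "inj_on (\<lambda>i. \<bar>w i\<bar>) {1..int n}" using w by (auto simp: SP_char)
  have "(\<lambda>i. \<bar>w i\<bar>) ` {1..int n} \<subseteq> {1..int n}" using sp_range[OF w] by auto
  then have "(\<lambda>i. \<bar>w i\<bar>) ` {1..int n} = {1..int n}" using endo_inj_surj[OF _ _ inj] by auto
  then show ?thesis using inj unfolding bij_betw_def by blast
qed

definition ins :: "nat \<Rightarrow> (int \<Rightarrow> int) \<Rightarrow> int \<times> int \<Rightarrow> (int \<Rightarrow> int)" where
  "ins m w e = (if fst e = 0 then w(int m + 1 := snd e * (int m + 1), - (int m + 1) := - (snd e * (int m + 1)))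
     else w(fst e := snd e * (int m + 1), - fst e := - (snd e * (int m + 1)), int m + 1 := w (fst e), - (int m + 1) := - w (fst e)))"

definition Ext :: "nat \<Rightarrow> (int \<times> int) set" where
  "Ext m = {0..int m} \<times> {1, -1}"

lemma ins_mem:
  assumes w: "w \<in> signed_perms m" and e: "e \<in> Ext m"
  shows "ins m w e \<in> signed_perms (Suc m)"
proof -
  obtain j s where es: "e = (j, s)" and j: "0 \<le> j" "j \<le> int m" and s: "s = 1 \<or> s = -1"
    using e unfolding Ext_def by auto
  note rng = sp_range[OF w] and out = sp_out'[OF w] and ng = sp_neg[OF w] and inj = sp_inj[OF w]
  show ?thesis
  proof (cases "j = 0")
    case True
    let ?w = "w(int m + 1 := s * (int m + 1), - (int m + 1) := - (s * (int m + 1)))"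
    have "?w \<in> signed_perms (Suc m)"
      unfolding SP_char
    proof (intro conjI ballI allI impI)
      fix i assume "i \<notin> pm_set (Suc m)" then show "?w i = i" using out by (auto simp: pm_iff)
    next
      fix i assume "i \<in> pm_set (Suc m)" then show "?w (-i) = - ?w i" using ng by (auto simp: pm_iff)
    next
      fix i assume "i \<in> {1..int (Suc m)}" then have i: "1 \<le> i" "i \<le> int m + 1" by auto
      show "?w i \<in> pm_set (Suc m)"
      proof (cases "i = int m + 1")
        case True then show ?thesis using s by (auto simp: pm_iff)
      next
        case False then have "i \<le> int m" using i by simp
        then have "1 \<le> \<bar>w i\<bar> \<and> \<bar>w i\<bar> \<le> int m" using rng i by simp
        then show ?thesis using False i by (simp add: pm_iff)
      qed
    next
      have av: "\<bar>?w a\<bar> = (if a = int m + 1 then int m + 1 else \<bar>w a\<bar>)" if "a \<in> {1..int (Suc m)}" for a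
        using that s by auto
      show "inj_on (\<lambda>i. \<bar>?w i\<bar>) {1..int (Suc m)}"
      proof (rule inj_onI)
        fix a b assume a: "a \<in> {1..int (Suc m)}" and b: "b \<in> {1..int (Suc m)}" and ab: "\<bar>?w a\<bar> = \<bar>?w b\<bar>"
        have ab': "(if a = int m + 1 then int m + 1 else \<bar>w a\<bar>) = (if b = int m + 1 then int m + 1 else \<bar>w b\<bar>)"
          using ab av[OF a] av[OF b] by simp
        show "a = b"
        proof (cases "a = int m + 1"; cases "b = int m + 1")
          assume "a \<noteq> int m + 1" "b \<noteq> int m + 1"
          then show "a = b" using ab' a b inj[of a b] by simp
        next
          assume "a = int m + 1" "b \<noteq> int m + 1"
          then show "a = b" using ab' b rng[of b] by simp
        next
          assume "a \<noteq> int m + 1" "b = int m + 1"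
          then show "a = b" using ab' a rng[of a] by simp
        qed simp
      qed
    qed
    then show ?thesis using True es unfolding ins_def by simp
  next
    case False
    then have j1: "1 \<le> j" using j by simp
    let ?w = "w(j := s * (int m + 1), - j := - (s * (int m + 1)), int m + 1 := w j, - (int m + 1) := - w j)"
    have "?w \<in> signed_perms (Suc m)"
      unfolding SP_char
    proof (intro conjI ballI allI impI)
      fix i assume "i \<notin> pm_set (Suc m)" then show "?w i = i" using out j1 j by (auto simp: pm_iff)
    next
      fix i assume "i \<in> pm_set (Suc m)" then show "?w (-i) = - ?w i" using ng j1 j by (auto simp: pm_iff)
    next
      fix i assume "i \<in> {1..int (Suc m)}" then show "?w i \<in> pm_set (Suc m)" using rng[of i] rng[of j] s j1 j
        by (auto simp: pm_iff)
    next
      show "inj_on (\<lambda>i. \<bar>?w i\<bar>) {1..int (Suc m)}"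
      proof (rule inj_onI)
        fix a b assume a: "a \<in> {1..int (Suc m)}" and b: "b \<in> {1..int (Suc m)}" and ab: "\<bar>?w a\<bar> = \<bar>?w b\<bar>"
        have av: "\<bar>?w c\<bar> = (if c = j then int m + 1 else if c = int m + 1 then \<bar>w j\<bar> else \<bar>w c\<bar>)"
          if "c \<in> {1..int (Suc m)}" for c
          using that s j1 j by auto
        have ab': "(if a = j then int m + 1 else if a = int m + 1 then \<bar>w j\<bar> else \<bar>w a\<bar>) =
            (if b = j then int m + 1 else if b = int m + 1 then \<bar>w j\<bar> else \<bar>w b\<bar>)"
          using ab av[OF a] av[OF b] by simp
        have ra: "a \<noteq> int m + 1 \<Longrightarrow> 1 \<le> \<bar>w a\<bar> \<and> \<bar>w a\<bar> \<le> int m" using a rng[of a] by simp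
        have rb: "b \<noteq> int m + 1 \<Longrightarrow> 1 \<le> \<bar>w b\<bar> \<and> \<bar>w b\<bar> \<le> int m" using b rng[of b] by simp
        have rj: "1 \<le> \<bar>w j\<bar> \<and> \<bar>w j\<bar> \<le> int m" using j1 j rng[of j] by simp
        have ia: "a \<noteq> int m + 1 \<Longrightarrow> b \<noteq> int m + 1 \<Longrightarrow> \<bar>w a\<bar> = \<bar>w b\<bar> \<Longrightarrow> a = b" using a b inj[of a b] by simp
        have iaj: "a \<noteq> int m + 1 \<Longrightarrow> \<bar>w a\<bar> = \<bar>w j\<bar> \<Longrightarrow> a = j" using a j1 j inj[of a j] by simp
        have ibj: "b \<noteq> int m + 1 \<Longrightarrow> \<bar>w b\<bar> = \<bar>w j\<bar> \<Longrightarrow> b = j" using b j1 j inj[of b j] by simp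
        have jN: "j \<noteq> int m + 1" using j by simp
        show "a = b" using ab' ra rb rj ia iaj ibj jN by (simp split: if_splits)
      qed
    qed
    then show ?thesis using False es unfolding ins_def by simp
  qed
qed

definition rj :: "nat \<Rightarrow> (int \<Rightarrow> int) \<Rightarrow> int" where
  "rj m w = (if \<bar>w (int m + 1)\<bar> = int m + 1 then 0 else (THE j. 1 \<le> j \<and> j \<le> int m \<and> \<bar>w j\<bar> = int m + 1))"

definition rs :: "nat \<Rightarrow> (int \<Rightarrow> int) \<Rightarrow> int" where
  "rs m w = sgn (w (if rj m w = 0 then int m + 1 else rj m w))"

definition rw :: "nat \<Rightarrow> (int \<Rightarrow> int) \<Rightarrow> (int \<Rightarrow> int)" where
  "rw m w = (if rj m w = 0 then w(int m + 1 := int m + 1, - (int m + 1) := - (int m + 1))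
     else w(rj m w := w (int m + 1), - rj m w := - w (int m + 1), int m + 1 := int m + 1, - (int m + 1) := - (int m + 1)))"

lemma rj_facts:
  assumes w: "w \<in> signed_perms (Suc m)" and nf: "\<bar>w (int m + 1)\<bar> \<noteq> int m + 1"
  shows "1 \<le> rj m w \<and> rj m w \<le> int m \<and> \<bar>w (rj m w)\<bar> = int m + 1"
proof -
  have "int m + 1 \<in> (\<lambda>i. \<bar>w i\<bar>) ` {1..int (Suc m)}" using sp_bij[OF w] unfolding bij_betw_def by auto
  then obtain j where j: "j \<in> {1..int (Suc m)}" "\<bar>w j\<bar> = int m + 1" by auto
  have jN: "j \<noteq> int m + 1" using j nf by auto
  have P: "1 \<le> j \<and> j \<le> int m \<and> \<bar>w j\<bar> = int m + 1" using j jN by auto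
  have "(THE j. 1 \<le> j \<and> j \<le> int m \<and> \<bar>w j\<bar> = int m + 1) = j"
  proof (rule the_equality)
    fix j' assume "1 \<le> j' \<and> j' \<le> int m \<and> \<bar>w j'\<bar> = int m + 1"
    then show "j' = j" using sp_inj[OF w, of j' j] P by simp
  qed (rule P)
  then show ?thesis using P nf unfolding rj_def by simp
qed

lemma r_mem:
  assumes w: "w \<in> signed_perms (Suc m)"
  shows "rw m w \<in> signed_perms m \<and> (rj m w, rs m w) \<in> Ext m"
proof -
  note rng = sp_range[OF w] and out = sp_out'[OF w] and ng = sp_neg[OF w] and inj = sp_inj[OF w]
  have rN: "1 \<le> \<bar>w (int m + 1)\<bar> \<and> \<bar>w (int m + 1)\<bar> \<le> int m + 1" using rng[of "int m + 1"] by simp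
  show ?thesis
  proof (cases "\<bar>w (int m + 1)\<bar> = int m + 1")
    case True
    then have rj0: "rj m w = 0" unfolding rj_def by simp
    have sg: "rs m w = 1 \<or> rs m w = -1" unfolding rs_def rj0 using True by (auto simp: sgn_if)
    let ?w = "w(int m + 1 := int m + 1, - (int m + 1) := - (int m + 1))"
    have "?w \<in> signed_perms m"
      unfolding SP_char
    proof (intro conjI ballI allI impI)
      fix i assume "i \<notin> pm_set m" then show "?w i = i" using out by (auto simp: pm_iff)
    next
      fix i assume "i \<in> pm_set m" then show "?w (-i) = - ?w i" using ng by (auto simp: pm_iff)
    next
      fix i assume "i \<in> {1..int m}"
      then have i: "1 \<le> i" "i \<le> int m" by auto
      have "\<bar>w i\<bar> \<noteq> int m + 1" using inj[of i "int m + 1"] True i by auto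
      then show "?w i \<in> pm_set m" using rng[of i] i by (auto simp: pm_iff)
    next
      show "inj_on (\<lambda>i. \<bar>?w i\<bar>) {1..int m}"
      proof (rule inj_onI)
        fix a b assume a: "a \<in> {1..int m}" and b: "b \<in> {1..int m}" and ab: "\<bar>?w a\<bar> = \<bar>?w b\<bar>"
        have "\<bar>w a\<bar> = \<bar>w b\<bar>" using ab a b by simp
        then show "a = b" using inj[of a b] a b by simp
      qed
    qed
    then show ?thesis unfolding rw_def Ext_def using rj0 sg by auto
  next
    case False
    define j where "j = rj m w"
    have j: "1 \<le> j" "j \<le> int m" "\<bar>w j\<bar> = int m + 1" using rj_facts[OF w False] unfolding j_def by auto
    have sg: "rs m w = 1 \<or> rs m w = -1" unfolding rs_def j_def[symmetric] using j by (auto simp: sgn_if)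
    let ?w = "w(j := w (int m + 1), - j := - w (int m + 1), int m + 1 := int m + 1, - (int m + 1) := - (int m + 1))"
    have wN: "1 \<le> \<bar>w (int m + 1)\<bar> \<and> \<bar>w (int m + 1)\<bar> \<le> int m" using rN False by simp
    have other: "1 \<le> \<bar>w i\<bar> \<and> \<bar>w i\<bar> \<le> int m" if "1 \<le> i" "i \<le> int m" "i \<noteq> j" for i
    proof -
      have "\<bar>w i\<bar> \<noteq> int m + 1" using inj[of i j] that j by auto
      then show ?thesis using rng[of i] that by simp
    qed
    have "?w \<in> signed_perms m"
      unfolding SP_char
    proof (intro conjI ballI allI impI)
      fix i assume "i \<notin> pm_set m" then show "?w i = i" using out j by (auto simp: pm_iff)
    next
      fix i assume "i \<in> pm_set m" then show "?w (-i) = - ?w i" using ng j by (auto simp: pm_iff)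
    next
      fix i assume "i \<in> {1..int m}"
      then have i: "1 \<le> i" "i \<le> int m" by auto
      show "?w i \<in> pm_set m"
      proof (cases "i = j")
        case True then show ?thesis using wN j by (simp add: pm_iff)
      next
        case False then show ?thesis using other[OF i False] i j by (simp add: pm_iff)
      qed
    next
      show "inj_on (\<lambda>i. \<bar>?w i\<bar>) {1..int m}"
      proof (rule inj_onI)
        fix a b assume a: "a \<in> {1..int m}" and b: "b \<in> {1..int m}" and ab: "\<bar>?w a\<bar> = \<bar>?w b\<bar>"
        have av: "\<bar>?w c\<bar> = (if c = j then \<bar>w (int m + 1)\<bar> else \<bar>w c\<bar>)" if "c \<in> {1..int m}" for c
          using that j by auto
        have ab': "(if a = j then \<bar>w (int m + 1)\<bar> else \<bar>w a\<bar>) = (if b = j then \<bar>w (int m + 1)\<bar> else \<bar>w b\<bar>)"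
          using ab av[OF a] av[OF b] by simp
        have ia: "\<bar>w a\<bar> = \<bar>w b\<bar> \<Longrightarrow> a = b" using a b inj[of a b] by simp
        have iaN: "\<bar>w a\<bar> = \<bar>w (int m + 1)\<bar> \<Longrightarrow> False" using a inj[of a "int m + 1"] by simp
        have ibN: "\<bar>w b\<bar> = \<bar>w (int m + 1)\<bar> \<Longrightarrow> False" using b inj[of b "int m + 1"] by simp
        show "a = b" using ab' ia iaN ibN by (auto split: if_splits)
      qed
    qed
    moreover have "rj m w \<noteq> 0" using j j_def by simp
    ultimately show ?thesis unfolding rw_def Ext_def using sg j j_def by auto
  qed
qed

lemma ins_r:
  assumes w: "w \<in> signed_perms (Suc m)"
  shows "ins m (rw m w) (rj m w, rs m w) = w"
proof -
  note ng = sp_neg[OF w]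
  show ?thesis
  proof (cases "\<bar>w (int m + 1)\<bar> = int m + 1")
    case True
    then have rj0: "rj m w = 0" unfolding rj_def by simp
    have e: "sgn (w (int m + 1)) * (int m + 1) = w (int m + 1)" using True by (auto simp: sgn_if abs_if split: if_splits)
    define s where "s = sgn (w (int m + 1))"
    have rs: "rs m w = s" unfolding rs_def rj0 s_def by simp
    have rw: "rw m w = w(int m + 1 := int m + 1, - (int m + 1) := - (int m + 1))" unfolding rw_def rj0 by simp
    have ins: "ins m (rw m w) (rj m w, rs m w) = (rw m w)(int m + 1 := s * (int m + 1), - (int m + 1) := - (s * (int m + 1)))"
      unfolding ins_def rj0 rs by simp
    show ?thesis
    proof (rule ext)
      fix i
      consider "i = int m + 1" | "i = - (int m + 1)" | "i \<noteq> int m + 1" "i \<noteq> - (int m + 1)" by blast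
      then show "ins m (rw m w) (rj m w, rs m w) i = w i"
      proof cases
        case 1 then show ?thesis unfolding ins using e s_def by simp
      next
        case 2 then show ?thesis unfolding ins using e s_def ng[of "int m + 1"] by simp
      next
        case 3 then show ?thesis unfolding ins by (simp add: rw)
      qed
    qed
  next
    case False
    define j where "j = rj m w"
    have j: "1 \<le> j" "j \<le> int m" "\<bar>w j\<bar> = int m + 1" using rj_facts[OF w False] unfolding j_def by auto
    have e: "sgn (w j) * (int m + 1) = w j" using j by (auto simp: sgn_if abs_if split: if_splits)
    have j0: "j \<noteq> 0" using j by simp
    define s where "s = sgn (w j)"
    have rs: "rs m w = s" unfolding rs_def j_def[symmetric] s_def using j0 by simp
    have rw: "rw m w = w(j := w (int m + 1), - j := - w (int m + 1), int m + 1 := int m + 1, - (int m + 1) := - (int m + 1))"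
      unfolding rw_def j_def[symmetric] using j0 by simp
    have rwj: "rw m w j = w (int m + 1)" unfolding rw using j by simp
    have ins: "ins m (rw m w) (rj m w, rs m w) = (rw m w)(j := s * (int m + 1), - j := - (s * (int m + 1)), int m + 1 := w (int m + 1), - (int m + 1) := - w (int m + 1))"
      unfolding ins_def j_def[symmetric] rs using j0 rwj by simp
    show ?thesis
    proof (rule ext)
      fix i
      consider "i = j" | "i = -j" | "i = int m + 1" | "i = - (int m + 1)" | "i \<noteq> j" "i \<noteq> -j" "i \<noteq> int m + 1" "i \<noteq> - (int m + 1)"
        by blast
      then show "ins m (rw m w) (rj m w, rs m w) i = w i"
      proof cases
        case 1 then show ?thesis unfolding ins using e s_def j by simp
      next
        case 2 then show ?thesis unfolding ins using e s_def j ng[of j] by simp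
      next
        case 3 then show ?thesis unfolding ins using j by simp
      next
        case 4 then show ?thesis unfolding ins using j ng[of "int m + 1"] by simp
      next
        case 5 then show ?thesis unfolding ins by (simp add: rw)
      qed
    qed
  qed
qed

lemma r_ins:
  assumes w: "w \<in> signed_perms m" and e: "e \<in> Ext m"
  shows "rw m (ins m w e) = w \<and> (rj m (ins m w e), rs m (ins m w e)) = e"
proof -
  obtain j s where es: "e = (j, s)" and j: "0 \<le> j" "j \<le> int m" and s: "s = 1 \<or> s = -1"
    using e unfolding Ext_def by auto
  note rng = sp_range[OF w] and out = sp_out'[OF w] and ng = sp_neg[OF w] and inj = sp_inj[OF w]
  have w'm: "ins m w e \<in> signed_perms (Suc m)" by (rule ins_mem[OF w e])
  have oN: "w (int m + 1) = int m + 1" "w (- (int m + 1)) = - (int m + 1)" using out by auto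
  show ?thesis
  proof (cases "j = 0")
    case True
    let ?w = "w(int m + 1 := s * (int m + 1), - (int m + 1) := - (s * (int m + 1)))"
    have w': "ins m w e = ?w" unfolding ins_def es using True by simp
    have rj0: "rj m ?w = 0" unfolding rj_def using s by auto
    have h1: "rs m ?w = s" unfolding rs_def rj0 using s by (auto simp: sgn_mult)
    have h2: "rw m ?w = w" unfolding rw_def rj0 using oN by (auto simp: fun_eq_iff)
    show ?thesis unfolding w' using rj0 h1 h2 True es by (simp only: prod.inject simp_thms)
  next
    case False
    then have j1: "1 \<le> j" using j by simp
    let ?w = "w(j := s * (int m + 1), - j := - (s * (int m + 1)), int m + 1 := w j, - (int m + 1) := - w j)"
    have w': "ins m w e = ?w" unfolding ins_def es using False by simp
    have rjn: "1 \<le> \<bar>w j\<bar> \<and> \<bar>w j\<bar> \<le> int m" using rng[of j] j1 j by simp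
    have nf: "\<bar>?w (int m + 1)\<bar> \<noteq> int m + 1" using rjn j by simp
    have rf: "1 \<le> rj m ?w \<and> rj m ?w \<le> int m \<and> \<bar>?w (rj m ?w)\<bar> = int m + 1"
      using rj_facts[OF w'm[unfolded w'] nf] .
    have "\<bar>?w j\<bar> = int m + 1" using s j1 j by auto
    have rjj: "rj m ?w = j"
    proof (rule ccontr)
      assume ne: "rj m ?w \<noteq> j"
      define r where "r = rj m ?w"
      have r: "1 \<le> r" "r \<le> int m" "\<bar>?w r\<bar> = int m + 1" using rf unfolding r_def by auto
      have rne: "r \<noteq> j" using ne unfolding r_def .
      have "?w r = w r" using r rne j1 by simp
      then have "\<bar>w r\<bar> = int m + 1" using r by simp
      then show False using rng[of r] r by simp
    qed
    have wj: "?w j = s * (int m + 1)" using j1 j by simp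
    have sg: "sgn (s * (int m + 1)) = s" using s by (auto simp: sgn_if)
    have h1: "rs m ?w = s" unfolding rs_def rjj using False wj sg by simp
    have h2: "rw m ?w = w"
    proof (rule ext)
      fix i
      have a: "?w (int m + 1) = w j" using j1 j by simp
      have "rw m ?w i = (?w(j := w j, - j := - w j, int m + 1 := int m + 1, - (int m + 1) := - (int m + 1))) i"
        unfolding rw_def rjj a using False by simp
      also have "\<dots> = w i"
      proof -
        consider "i = j" | "i = -j" | "i = int m + 1" | "i = - (int m + 1)" | "i \<noteq> j" "i \<noteq> -j" "i \<noteq> int m + 1" "i \<noteq> - (int m + 1)"
          by blast
        then show ?thesis
        proof cases
          case 1 then show ?thesis using j1 j by simp
        next
          case 2 then show ?thesis using j1 j ng[of j] by simp
        next
          case 3 then show ?thesis using j1 j oN by simp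
        next
          case 4 then show ?thesis using j1 j oN by simp
        next
          case 5 then show ?thesis by simp
        qed
      qed
      finally show "rw m ?w i = w i" .
    qed
    show ?thesis unfolding w' using rjj h1 h2 es by (simp only: prod.inject simp_thms)
  qed
qed

lemma ins_bij: "bij_betw (\<lambda>(w, e). ins m w e) (signed_perms m \<times> Ext m) (signed_perms (Suc m))"
proof (rule bij_betw_byWitness[where f' = "\<lambda>w. (rw m w, (rj m w, rs m w))"])
  show "\<forall>a\<in>signed_perms m \<times> Ext m. (\<lambda>w. (rw m w, rj m w, rs m w)) ((\<lambda>(w, e). ins m w e) a) = a"
    using r_ins by auto
  show "\<forall>a'\<in>signed_perms (Suc m). (\<lambda>(w, e). ins m w e) ((\<lambda>w. (rw m w, rj m w, rs m w)) a') = a'"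
    using ins_r by auto
  show "(\<lambda>(w, e). ins m w e) ` (signed_perms m \<times> Ext m) \<subseteq> signed_perms (Suc m)"
    using ins_mem by auto
  show "(\<lambda>w. (rw m w, rj m w, rs m w)) ` signed_perms (Suc m) \<subseteq> signed_perms m \<times> Ext m"
    using r_mem by auto
qed


definition orb :: "(int \<Rightarrow> int) \<Rightarrow> int \<Rightarrow> int set" where
  "orb f i = {(f ^^ t) i | t. True}"

lemma cyc_orb: "cyc n w = card ((\<lambda>i. orb (\<lambda>j. \<bar>w j\<bar>) i) ` {1..int n})"
  unfolding cyc_def orb_def ..

lemma orb_self: "i \<in> orb f i"
  unfolding orb_def by (auto intro: exI[of _ 0])

lemma orb_step: "u \<in> orb f i \<Longrightarrow> f u \<in> orb f i"
proof -
  assume "u \<in> orb f i"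
  then obtain t where "u = (f ^^ t) i" unfolding orb_def by auto
  then have "f u = (f ^^ Suc t) i" by simp
  then show ?thesis unfolding orb_def by blast
qed

lemma orb_ind:
  assumes "P i" "\<And>u. P u \<Longrightarrow> P (f u)"
  shows "orb f i \<subseteq> {u. P u}"
proof -
  have "P ((f ^^ t) i)" for t by (induction t) (use assms in auto)
  then show ?thesis unfolding orb_def by auto
qed

lemma orb_sub: "u \<in> orb f i \<Longrightarrow> orb f u \<subseteq> orb f i"
  using orb_ind[of "\<lambda>v. v \<in> orb f i" u f] orb_step by blast

lemma orb_eq_on:
  assumes "\<And>u. u \<in> S \<Longrightarrow> f u = g u" "\<And>u. u \<in> S \<Longrightarrow> g u \<in> S" "i \<in> S"
  shows "orb f i = orb g i"
proof -
  have "(f ^^ t) i = (g ^^ t) i \<and> (g ^^ t) i \<in> S" for t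
    by (induction t) (use assms in auto)
  then show ?thesis unfolding orb_def by auto
qed

lemma funpow_inj_on:
  assumes "inj_on f S" "f ` S \<subseteq> S" "x \<in> S" "y \<in> S" "(f ^^ t) x = (f ^^ t) y"
  shows "x = y"
  using assms(3-5)
proof (induction t arbitrary: x y)
  case 0 then show ?case by simp
next
  case (Suc t)
  have "f ((f ^^ t) x) = f ((f ^^ t) y)" using Suc.prems(3) by simp
  moreover have "(f ^^ t) x \<in> S" "(f ^^ t) y \<in> S"
    using Suc.prems(1,2) assms(2) by (induction t) (auto simp: funpow_swap1) 
  ultimately have "(f ^^ t) x = (f ^^ t) y" using assms(1) unfolding inj_on_def by blast
  then show ?case using Suc by blast
qed

lemma funpow_in: "f ` S \<subseteq> S \<Longrightarrow> x \<in> S \<Longrightarrow> (f ^^ t) x \<in> S"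
  by (induction t) auto

lemma orb_cyc:
  assumes fin: "finite S" and fS: "f ` S \<subseteq> S" and inj: "inj_on f S" and i: "i \<in> S"
  shows "i \<in> orb f (f i)"
proof -
  define g where "g t = (f ^^ t) i" for t
  have gS: "g ` {0..card S} \<subseteq> S" unfolding g_def using funpow_in[OF fS i] by auto
  have "\<not> inj_on g {0..card S}"
  proof
    assume "inj_on g {0..card S}"
    then have "card {0..card S} \<le> card S" using card_inj_on_le[OF _ gS fin] by blast
    then show False by simp
  qed
  then obtain a b where ab: "a \<in> {0..card S}" "b \<in> {0..card S}" "a \<noteq> b" "g a = g b"
    unfolding inj_on_def by blast
  obtain a' b' where "a' < b'" "g a' = g b'"
    using ab by (metis linorder_neqE_nat)
  then have "(f ^^ a') i = (f ^^ a') ((f ^^ (b' - a')) i)"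
    unfolding g_def by (simp add: funpow_add[symmetric, THEN fun_cong, simplified] add.commute)
  then have e: "i = (f ^^ (b' - a')) i"
    using funpow_inj_on[OF inj fS i funpow_in[OF fS i]] by blast
  obtain c where c: "b' - a' = Suc c" using \<open>a' < b'\<close> by (metis Suc_diff_Suc)
  have "i = (f ^^ c) (f i)" using e unfolding c by (simp add: funpow_swap1)
  then show ?thesis unfolding orb_def by blast
qed

lemma orb_in: "(\<And>u. u \<in> S \<Longrightarrow> f u \<in> S) \<Longrightarrow> i \<in> S \<Longrightarrow> orb f i \<subseteq> S"
  using orb_ind[of "\<lambda>u. u \<in> S" i f] by blast

lemma cyc_fixed:
  assumes w: "w \<in> signed_perms m" and s: "s = 1 \<or> s = -1"
  shows "cyc (Suc m) (ins m w (0, s)) = Suc (cyc m w)"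
proof -
  define N where "N = int m + 1"
  define w' where "w' = ins m w (0, s)"
  have w'd: "w' = w(N := s * N, - N := - (s * N))" unfolding w'_def ins_def N_def by simp
  define sg where "sg = (\<lambda>u. \<bar>w u\<bar>)"
  define sg' where "sg' = (\<lambda>u. \<bar>w' u\<bar>)"
  have sS: "sg u \<in> {1..int m}" if "u \<in> {1..int m}" for u using sp_range[OF w, of u] that unfolding sg_def by auto
  have eq: "sg' u = sg u" if "u \<in> {1..int m}" for u using that unfolding sg'_def sg_def w'd N_def by auto
  have o1: "orb sg' i = orb sg i" if "i \<in> {1..int m}" for i
    by (rule orb_eq_on[of "{1..int m}"]) (use eq sS that in auto)
  have sN: "sg' N = N" unfolding sg'_def w'd N_def using s by auto
  have oN: "orb sg' N = {N}"
  proof -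
    have "(sg' ^^ t) N = N" for t by (induction t) (use sN in auto)
    then show ?thesis unfolding orb_def by auto
  qed
  have img: "(\<lambda>i. orb sg' i) ` {1..int (Suc m)} = insert {N} ((\<lambda>i. orb sg i) ` {1..int m})"
  proof -
    have "{1..int (Suc m)} = insert N {1..int m}" unfolding N_def by auto
    then show ?thesis using o1 oN by (auto simp: image_def)
  qed
  have notin: "{N} \<notin> (\<lambda>i. orb sg i) ` {1..int m}"
  proof
    assume "{N} \<in> (\<lambda>i. orb sg i) ` {1..int m}"
    then obtain i where i: "i \<in> {1..int m}" "{N} = orb sg i" by auto
    have "orb sg i \<subseteq> {1..int m}" by (rule orb_in) (use sS i in auto)
    then show False using i unfolding N_def by auto
  qed
  show ?thesis unfolding cyc_orb w'_def[symmetric] sg'_def[symmetric] sg_def[symmetric] img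
    using notin by simp
qed

lemma cyc_j:
  assumes w: "w \<in> signed_perms m" and s: "s = 1 \<or> s = -1" and j: "1 \<le> j" "j \<le> int m"
  shows "cyc (Suc m) (ins m w (j, s)) = cyc m w"
proof -
  define N where "N = int m + 1"
  define S where "S = {1..int m}"
  define w' where "w' = ins m w (j, s)"
  have w'd: "w' = w(j := s * N, - j := - (s * N), N := w j, - N := - w j)" unfolding w'_def ins_def N_def using j by simp
  define sg where "sg = (\<lambda>u. \<bar>w u\<bar>)"
  define sg' where "sg' = (\<lambda>u. \<bar>w' u\<bar>)"
  have jS: "j \<in> S" using j unfolding S_def by simp
  have NS: "N \<notin> S" unfolding S_def N_def by simp
  have sS: "sg u \<in> S" if "u \<in> S" for u using sp_range[OF w, of u] that unfolding sg_def S_def by auto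
  have finS: "finite S" unfolding S_def by simp
  have injS: "inj_on sg S" unfolding sg_def S_def inj_on_def using sp_inj[OF w] by auto
  have eq: "sg' u = sg u" if "u \<in> S" "u \<noteq> j" for u using that j unfolding sg'_def sg_def w'd N_def S_def by auto
  have sj: "sg' j = N" unfolding sg'_def w'd N_def using s j by auto
  have sN: "sg' N = sg j" unfolding sg'_def sg_def w'd N_def using j by auto
  have osS: "orb sg i \<subseteq> S" if "i \<in> S" for i by (rule orb_in) (use sS that in auto)
  define h where "h X = (if j \<in> X then insert N X else X)" for X
  have claim: "orb sg' i = h (orb sg i)" if iS: "i \<in> S" for i
  proof (cases "j \<in> orb sg i")
    case False
    have "orb sg' i = orb sg i"
    proof (rule orb_eq_on[of "orb sg i"])
      fix u assume "u \<in> orb sg i"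
      then show "sg' u = sg u" using eq osS[OF iS] False by auto
    next
      fix u assume "u \<in> orb sg i" then show "sg u \<in> orb sg i" by (rule orb_step)
    qed (rule orb_self)
    then show ?thesis unfolding h_def using False by simp
  next
    case True
    have sub1: "orb sg' i \<subseteq> insert N (orb sg i)"
    proof (rule orb_in)
      show "i \<in> insert N (orb sg i)" using orb_self by blast
      fix u assume u: "u \<in> insert N (orb sg i)"
      show "sg' u \<in> insert N (orb sg i)"
      proof (cases "u = N")
        case True then show ?thesis using sN orb_step[OF \<open>j \<in> orb sg i\<close>] by simp
      next
        case False
        then have uo: "u \<in> orb sg i" using u by simp
        show ?thesis
        proof (cases "u = j")
          case True then show ?thesis using sj by simp
        next
          case False then show ?thesis using eq[of u] osS[OF iS] uo orb_step[OF uo] by auto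
        qed
      qed
    qed
    have sub2: "orb sg i \<subseteq> orb sg' i \<inter> S"
    proof (rule orb_in)
      show "i \<in> orb sg' i \<inter> S" using orb_self iS by blast
      fix u assume u: "u \<in> orb sg' i \<inter> S"
      show "sg u \<in> orb sg' i \<inter> S"
      proof (cases "u = j")
        case True
        have "N \<in> orb sg' i" using orb_step[of u sg' i] u sj True by simp
        then have "sg' N \<in> orb sg' i" by (rule orb_step)
        then show ?thesis using sN True sS u by simp
      next
        case False
        then show ?thesis using eq[of u] u orb_step[of u sg' i] sS by auto
      qed
    qed
    have "N \<in> orb sg' i"
    proof -
      have "j \<in> orb sg' i" using sub2 True by blast
      then show ?thesis using orb_step[of j sg' i] sj by simp
    qed
    then have "orb sg' i = insert N (orb sg i)" using sub1 sub2 by blast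
    then show ?thesis unfolding h_def using True by simp
  qed
  have cycj: "j \<in> orb sg (sg j)" by (rule orb_cyc[OF finS _ injS jS]) (use sS in auto)
  have sjS: "sg j \<in> S" using sS jS .
  have osj: "orb sg (sg j) = orb sg j"
    using orb_sub[OF cycj] orb_sub[OF orb_step[OF orb_self[of j sg]]] by blast
  have oN: "orb sg' N = insert N (orb sg j)"
  proof
    show "orb sg' N \<subseteq> insert N (orb sg j)"
    proof (rule orb_in)
      show "N \<in> insert N (orb sg j)" by simp
      fix u assume u: "u \<in> insert N (orb sg j)"
      show "sg' u \<in> insert N (orb sg j)"
      proof (cases "u = N")
        case True then show ?thesis using sN orb_step[OF orb_self[of j sg]] by simp
      next
        case False
        then have uo: "u \<in> orb sg j" using u by simp
        show ?thesis
        proof (cases "u = j")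
          case True then show ?thesis using sj by simp
        next
          case False then show ?thesis using eq[of u] osS[OF jS] uo orb_step[OF uo] by auto
        qed
      qed
    qed
  next
    have "orb sg' (sg j) = h (orb sg (sg j))" by (rule claim[OF sjS])
    also have "\<dots> = insert N (orb sg j)" unfolding osj h_def using orb_self[of j sg] by simp
    finally have a: "orb sg' (sg j) = insert N (orb sg j)" .
    have "sg j \<in> orb sg' N" using orb_step[OF orb_self[of N sg']] sN by simp
    then have "orb sg' (sg j) \<subseteq> orb sg' N" by (rule orb_sub)
    then show "insert N (orb sg j) \<subseteq> orb sg' N" using a by simp
  qed
  have img: "(\<lambda>i. orb sg' i) ` {1..int (Suc m)} = h ` ((\<lambda>i. orb sg i) ` S)"
  proof -
    have "{1..int (Suc m)} = insert N S" unfolding N_def S_def by auto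
    then have "(\<lambda>i. orb sg' i) ` {1..int (Suc m)} = insert (orb sg' N) ((\<lambda>i. orb sg' i) ` S)" by simp
    also have "(\<lambda>i. orb sg' i) ` S = h ` ((\<lambda>i. orb sg i) ` S)" using claim by (auto simp: image_def)
    also have "orb sg' N = h (orb sg j)" unfolding oN h_def using orb_self[of j sg] by simp
    also have "insert (h (orb sg j)) (h ` ((\<lambda>i. orb sg i) ` S)) = h ` ((\<lambda>i. orb sg i) ` S)"
      using jS by auto
    finally show ?thesis .
  qed
  have injh: "inj_on h ((\<lambda>i. orb sg i) ` S)"
  proof (rule inj_onI)
    fix A B assume A: "A \<in> (\<lambda>i. orb sg i) ` S" and B: "B \<in> (\<lambda>i. orb sg i) ` S" and e: "h A = h B"
    have "N \<notin> A" "N \<notin> B" using A B osS NS by auto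
    then have "A = h A - {N}" "B = h B - {N}" unfolding h_def by auto
    then show "A = B" using e by simp
  qed
  show ?thesis unfolding cyc_orb w'_def[symmetric] sg'_def[symmetric] sg_def[symmetric] img S_def[symmetric]
    using card_image[OF injh] by simp
qed


definition Cw :: "(int \<Rightarrow> int) \<Rightarrow> int \<Rightarrow> bool" where
  "Cw w i \<longleftrightarrow> w i = i \<or> w \<bar>w i\<bar> > w i"

definition ind :: "(int \<Rightarrow> int) \<Rightarrow> int \<Rightarrow> nat" where
  "ind w i = (if Cw w i then 1 else 0)"

lemma wexc_sum: "wexc n w = (\<Sum>i\<in>{1..int n}. ind w i)"
proof -
  have "wexc n w = card {i \<in> {1..int n}. Cw w i}" unfolding wexc_def Cw_def ..
  also have "\<dots> = (\<Sum>i\<in>{i \<in> {1..int n}. Cw w i}. 1)" by (rule card_eq_sum)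
  also have "\<dots> = (\<Sum>i\<in>{1..int n}. if Cw w i then 1 else 0)" by (rule sum.inter_filter) simp
  also have "\<dots> = (\<Sum>i\<in>{1..int n}. ind w i)" unfolding ind_def ..
  finally show ?thesis .
qed

lemma Suc_interval: "{1..int (Suc m)} = insert (int m + 1) {1..int m}" by auto

lemma wexc_fixed:
  assumes w: "w \<in> signed_perms m" and s: "s = 1 \<or> s = -1"
  shows "wexc (Suc m) (ins m w (0, s)) = wexc m w + (if s = 1 then 1 else 0)"
proof -
  define N where "N = int m + 1"
  define w' where "w' = ins m w (0, s)"
  have w'd: "w' = w(N := s * N, - N := - (s * N))" unfolding w'_def ins_def N_def by simp
  have e: "ind w' i = ind w i" if "i \<in> {1..int m}" for i
  proof -
    have "1 \<le> \<bar>w i\<bar> \<and> \<bar>w i\<bar> \<le> int m" using sp_range[OF w, of i] that by auto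
    then show ?thesis using that unfolding ind_def Cw_def w'd N_def by auto
  qed
  have eN: "ind w' N = (if s = 1 then 1 else 0)" unfolding ind_def Cw_def w'd N_def using s by auto
  have "wexc (Suc m) w' = ind w' N + (\<Sum>i\<in>{1..int m}. ind w' i)"
    unfolding wexc_sum Suc_interval N_def[symmetric] by (simp add: N_def)
  also have "(\<Sum>i\<in>{1..int m}. ind w' i) = wexc m w" unfolding wexc_sum using e by simp
  finally show ?thesis unfolding w'_def[symmetric] eN by simp
qed

lemma wexc_j:
  assumes w: "w \<in> signed_perms m" and s: "s = 1 \<or> s = -1" and p: "1 \<le> p" "p \<le> int m"
  shows "wexc (Suc m) (ins m w (\<bar>w p\<bar>, s)) + ind w p = wexc m w + 1"
proof -
  define N where "N = int m + 1"
  define j where "j = \<bar>w p\<bar>"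
  define A where "A = {1..int m}"
  have j: "1 \<le> j" "j \<le> int m" using sp_range[OF w, of p] p unfolding j_def by auto
  define w' where "w' = ins m w (j, s)"
  have w'd: "w' = w(j := s * N, - j := - (s * N), N := w j, - N := - w j)" unfolding w'_def ins_def N_def using j by simp
  have rng: "1 \<le> \<bar>w i\<bar> \<and> \<bar>w i\<bar> \<le> int m" if "1 \<le> i" "i \<le> int m" for i using sp_range[OF w] that by auto
  have inj: "i = i'" if "1 \<le> i" "i \<le> int m" "1 \<le> i'" "i' \<le> int m" "\<bar>w i\<bar> = \<bar>w i'\<bar>" for i i'
    using sp_inj[OF w] that by blast
  have finA: "finite A" unfolding A_def by simp
  have pA: "p \<in> A" and jA: "j \<in> A" using p j unfolding A_def by auto
  have rest: "ind w' i = ind w i" if "i \<in> A" "i \<noteq> j" "i \<noteq> p" for i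
  proof -
    have i: "1 \<le> i" "i \<le> int m" using that unfolding A_def by auto
    have wi: "w' i = w i" using i that j unfolding w'd N_def by auto
    have ri: "1 \<le> \<bar>w i\<bar> \<and> \<bar>w i\<bar> \<le> int m" using rng[OF i] .
    have nj: "\<bar>w i\<bar> \<noteq> j" using inj[OF i p] that unfolding j_def by auto
    have "w' \<bar>w i\<bar> = w \<bar>w i\<bar>" using ri nj j unfolding w'd N_def by auto
    then show ?thesis unfolding ind_def Cw_def wi by simp
  qed
  have rjj: "1 \<le> \<bar>w j\<bar> \<and> \<bar>w j\<bar> \<le> int m" using rng[OF j] .
  have indj: "ind w' j = (if s = -1 then 1 else 0)"
  proof -
    have a: "w' j = s * N" unfolding w'd using j unfolding N_def by auto
    have b: "w' N = w j" unfolding w'd N_def using j by auto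
    have Ng: "N > int m" unfolding N_def by simp
    have c: "\<bar>s * N\<bar> = N" using s Ng by auto
    show ?thesis unfolding ind_def Cw_def a c b using s rjj j Ng by auto
  qed
  have wN: "w' N = w j" unfolding w'd N_def using j by auto
  have sumw': "wexc (Suc m) w' = ind w' N + (\<Sum>i\<in>A. ind w' i)"
    unfolding wexc_sum Suc_interval N_def[symmetric] A_def by (simp add: N_def)
  show ?thesis
  proof (cases "p = j")
    case True
    have wjj: "\<bar>w j\<bar> = j" using True unfolding j_def by simp
    have indN: "ind w' N = (if s = 1 then 1 else 0)"
    proof -
      have a: "w' \<bar>w j\<bar> = s * N" unfolding wjj w'd N_def using j by auto
      have Ng: "N > int m" unfolding N_def by simp
      show ?thesis unfolding ind_def Cw_def wN a using s rjj Ng by auto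
    qed
    have r1: "(\<Sum>i\<in>A. ind w' i) = ind w' j + (\<Sum>i\<in>A - {j}. ind w i)"
    proof -
      have "(\<Sum>i\<in>A. ind w' i) = ind w' j + (\<Sum>i\<in>A - {j}. ind w' i)" using sum.remove[OF finA jA] .
      also have "(\<Sum>i\<in>A - {j}. ind w' i) = (\<Sum>i\<in>A - {j}. ind w i)"
        using rest True by (intro sum.cong) auto
      finally show ?thesis .
    qed
    have r2: "wexc m w = ind w j + (\<Sum>i\<in>A - {j}. ind w i)"
      unfolding wexc_sum A_def[symmetric] using sum.remove[OF finA jA] .
    have ww: "wexc (Suc m) (ins m w (\<bar>w p\<bar>, s)) = wexc (Suc m) w'" unfolding w'_def j_def ..
    show ?thesis unfolding ww sumw' r1 r2 indN indj using s True by auto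
  next
    case False
    have nwj: "\<bar>w j\<bar> \<noteq> j" using inj[OF j p] False unfolding j_def by auto
    have indN: "ind w' N = ind w j"
    proof -
      have a: "w' \<bar>w j\<bar> = w \<bar>w j\<bar>" using rjj nwj j unfolding w'd N_def by auto
      have Ng: "N > int m" unfolding N_def by simp
      have "w j \<noteq> j" using nwj j by auto
      then show ?thesis unfolding ind_def Cw_def wN a using rjj Ng by auto
    qed
    have indp: "ind w' p = (if s = 1 then 1 else 0)"
    proof -
      have a: "w' p = w p" using p False j unfolding w'd N_def by auto
      have b: "w' \<bar>w p\<bar> = s * N" unfolding j_def[symmetric] w'd N_def using j by auto
      have c: "w p \<noteq> p" using False p unfolding j_def by auto
      have d: "\<bar>w p\<bar> \<le> int m" using rng[OF p] by simp
      have Ng: "N > int m" unfolding N_def by simp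
      show ?thesis unfolding ind_def Cw_def a b using s c d Ng by auto
    qed
    have pA': "p \<in> A - {j}" using pA False by simp
    have r1: "(\<Sum>i\<in>A. ind w' i) = ind w' j + (ind w' p + (\<Sum>i\<in>A - {j} - {p}. ind w i))"
    proof -
      have "(\<Sum>i\<in>A. ind w' i) = ind w' j + (\<Sum>i\<in>A - {j}. ind w' i)" using sum.remove[OF finA jA] .
      also have "(\<Sum>i\<in>A - {j}. ind w' i) = ind w' p + (\<Sum>i\<in>A - {j} - {p}. ind w' i)"
        using sum.remove[OF _ pA'] finA by simp
      also have "(\<Sum>i\<in>A - {j} - {p}. ind w' i) = (\<Sum>i\<in>A - {j} - {p}. ind w i)"
        using rest by (intro sum.cong) auto
      finally show ?thesis .
    qed
    have r2: "wexc m w = ind w j + (ind w p + (\<Sum>i\<in>A - {j} - {p}. ind w i))"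
    proof -
      have "wexc m w = ind w j + (\<Sum>i\<in>A - {j}. ind w i)"
        unfolding wexc_sum A_def[symmetric] using sum.remove[OF finA jA] .
      also have "(\<Sum>i\<in>A - {j}. ind w i) = ind w p + (\<Sum>i\<in>A - {j} - {p}. ind w i)"
        using sum.remove[OF _ pA'] finA by simp
      finally show ?thesis .
    qed
    have ww: "wexc (Suc m) (ins m w (\<bar>w p\<bar>, s)) = wexc (Suc m) w'" unfolding w'_def j_def ..
    show ?thesis unfolding ww sumw' r1 r2 indN indj indp using s by auto
  qed
qed

lemma aexc_wexc:
  assumes w: "w \<in> signed_perms n"
  shows "aexc n w = n - wexc n w"
proof -
  have injw: "inj_on w (pm_set n)" using w unfolding signed_perms_def bij_betw_def by auto
  have key: "(w i = - i \<or> w \<bar>w i\<bar> < w i) \<longleftrightarrow> \<not> Cw w i" if i: "i \<in> {1..int n}" for i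
  proof -
    have ri: "1 \<le> \<bar>w i\<bar> \<and> \<bar>w i\<bar> \<le> int n" using sp_range[OF w] i by auto
    show ?thesis
    proof (cases "w i = i \<or> w i = -i")
      case True
      then show ?thesis unfolding Cw_def using i by auto
    next
      case False
      have "w \<bar>w i\<bar> \<noteq> w i"
      proof
        assume "w \<bar>w i\<bar> = w i"
        moreover have "\<bar>w i\<bar> \<in> pm_set n" "i \<in> pm_set n" using ri i by (auto simp: pm_iff)
        ultimately have "\<bar>w i\<bar> = i" using injw unfolding inj_on_def by blast
        then show False using False by auto
      qed
      then show ?thesis unfolding Cw_def using False by auto
    qed
  qed
  have "{i \<in> {1..int n}. w i = - i \<or> w \<bar>w i\<bar> < w i} = {1..int n} - {i \<in> {1..int n}. Cw w i}"
  proof (rule set_eqI)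
    fix i show "i \<in> {i \<in> {1..int n}. w i = - i \<or> w \<bar>w i\<bar> < w i} \<longleftrightarrow> i \<in> {1..int n} - {i \<in> {1..int n}. Cw w i}"
      by (cases "i \<in> {1..int n}") (use key[of i] in auto)
  qed
  then have "aexc n w = card ({1..int n} - {i \<in> {1..int n}. Cw w i})" unfolding aexc_def by simp
  also have "\<dots> = card {1..int n} - card {i \<in> {1..int n}. Cw w i}" by (rule card_Diff_subset) (auto intro: finite_subset[OF _ finite_atLeastAtMost_int])
  also have "\<dots> = n - wexc n w" unfolding wexc_def Cw_def by simp
  finally show ?thesis .
qed


definition fw :: "nat \<Rightarrow> real \<Rightarrow> real \<Rightarrow> real \<Rightarrow> (int \<Rightarrow> int) \<Rightarrow> real" where
  "fw n x y k w = x ^ wexc n w * y ^ (n - wexc n w) * k ^ (n - cyc n w)"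

lemma F_poly_fw: "F_poly n x y k = (\<Sum>w\<in>signed_perms n. fw n x y k w)"
  unfolding F_poly_def fw_def by (intro sum.cong refl) (simp add: aexc_wexc)

lemma wexc_le: "wexc n w \<le> n"
proof -
  have "wexc n w \<le> card {1..int n}" unfolding wexc_def by (rule card_mono) auto
  then show ?thesis by simp
qed

lemma cyc_le: "cyc n w \<le> n"
proof -
  have "cyc n w \<le> card {1..int n}" unfolding cyc_def by (rule card_image_le) simp
  then show ?thesis by simp
qed

lemma per_w:
  fixes x y k :: real
  assumes w: "w \<in> signed_perms m"
  shows "(\<Sum>e\<in>Ext m. fw (Suc m) x y k (ins m w e))
       = (x + y + 2*k*of_nat m*x) * fw m x y k w + 2*k*(y-x) * (of_nat (wexc m w) * fw m x y k w)"
proof -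
  define a where "a = wexc m w"
  define c where "c = cyc m w"
  define P where "P = fw m x y k w"
  have am: "a \<le> m" unfolding a_def by (rule wexc_le)
  have cm: "c \<le> m" unfolding c_def by (rule cyc_le)
  have P: "P = x^a * y^(m-a) * k^(m-c)" unfolding P_def fw_def a_def c_def ..
  have f1: "fw (Suc m) x y k (ins m w (0, 1)) = x * P"
  proof -
    have "wexc (Suc m) (ins m w (0, 1)) = Suc a" using wexc_fixed[OF w, of 1] unfolding a_def by simp
    moreover have "cyc (Suc m) (ins m w (0, 1)) = Suc c" using cyc_fixed[OF w, of 1] unfolding c_def by simp
    ultimately show ?thesis unfolding fw_def P by simp
  qed
  have f2: "fw (Suc m) x y k (ins m w (0, -1)) = y * P"
  proof -
    have "wexc (Suc m) (ins m w (0, -1)) = a" using wexc_fixed[OF w, of "-1"] unfolding a_def by simp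
    moreover have "cyc (Suc m) (ins m w (0, -1)) = Suc c" using cyc_fixed[OF w, of "-1"] unfolding c_def by simp
    moreover have "Suc m - a = Suc (m - a)" using am by simp
    ultimately show ?thesis unfolding fw_def P by simp
  qed
  define g where "g p = (if Cw w p then y * k * P else x * k * P)" for p
  have fj: "fw (Suc m) x y k (ins m w (\<bar>w p\<bar>, s)) = g p" if p: "1 \<le> p" "p \<le> int m" and s: "s = 1 \<or> s = -1" for p s
  proof -
    have jr: "1 \<le> \<bar>w p\<bar> \<and> \<bar>w p\<bar> \<le> int m" using sp_range[OF w] p by auto
    have cy: "cyc (Suc m) (ins m w (\<bar>w p\<bar>, s)) = c" using cyc_j[OF w s] jr unfolding c_def by simp
    have wx: "wexc (Suc m) (ins m w (\<bar>w p\<bar>, s)) + ind w p = Suc a" using wexc_j[OF w s p] unfolding a_def by simp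
    have kk: "k ^ (Suc m - c) = k * k^(m-c)" using cm by (simp add: Suc_diff_le)
    show ?thesis
    proof (cases "Cw w p")
      case True
      then have "wexc (Suc m) (ins m w (\<bar>w p\<bar>, s)) = a" using wx unfolding ind_def by simp
      moreover have "Suc m - a = Suc (m - a)" using am by simp
      ultimately show ?thesis unfolding fw_def g_def P cy kk using True by simp
    next
      case False
      then have "wexc (Suc m) (ins m w (\<bar>w p\<bar>, s)) = Suc a" using wx unfolding ind_def by simp
      then show ?thesis unfolding fw_def g_def P cy kk using False by simp
    qed
  qed
  have ext: "Ext m = {0..int m} \<times> {1, -1}" unfolding Ext_def ..
  have "(\<Sum>e\<in>Ext m. fw (Suc m) x y k (ins m w e)) = (\<Sum>j\<in>{0..int m}. \<Sum>s\<in>{1, -1}. fw (Suc m) x y k (ins m w (j, s)))"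
    unfolding ext sum.cartesian_product by (simp add: case_prod_beta')
  also have "{0..int m} = insert 0 {1..int m}" by auto
  also have "(\<Sum>j\<in>insert 0 {1..int m}. \<Sum>s\<in>{1, -1}. fw (Suc m) x y k (ins m w (j, s)))
      = (x * P + y * P) + (\<Sum>j\<in>{1..int m}. \<Sum>s\<in>{1, -1}. fw (Suc m) x y k (ins m w (j, s)))"
    using f1 f2 by simp
  also have "(\<Sum>j\<in>{1..int m}. \<Sum>s\<in>{1, -1}. fw (Suc m) x y k (ins m w (j, s)))
      = (\<Sum>p\<in>{1..int m}. \<Sum>s\<in>{1, -1}. fw (Suc m) x y k (ins m w (\<bar>w p\<bar>, s)))"
    using sum.reindex_bij_betw[OF sp_bij[OF w], of "\<lambda>j. \<Sum>s\<in>{1, -1}. fw (Suc m) x y k (ins m w (j, s))"] by simp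
  also have "\<dots> = (\<Sum>p\<in>{1..int m}. 2 * g p)"
    by (intro sum.cong refl) (simp add: fj)
  also have "\<dots> = (\<Sum>p\<in>{1..int m}. 2 * k * P * (of_nat (ind w p) * y + (1 - of_nat (ind w p)) * x))"
    by (intro sum.cong refl) (simp add: g_def ind_def)
  also have "\<dots> = 2 * k * P * (of_nat a * y + (of_nat m - of_nat a) * x)"
  proof -
    have s1: "(\<Sum>p\<in>{1..int m}. real (ind w p)) = of_nat a" unfolding a_def wexc_sum by simp
    have "(\<Sum>p\<in>{1..int m}. 2 * k * P * (of_nat (ind w p) * y + (1 - of_nat (ind w p)) * x))
        = 2 * k * P * ((\<Sum>p\<in>{1..int m}. real (ind w p)) * y + (of_nat m - (\<Sum>p\<in>{1..int m}. real (ind w p))) * x)"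
      by (simp add: sum_distrib_left sum_distrib_right sum.distrib sum_subtractf algebra_simps)
    then show ?thesis unfolding s1 .
  qed
  finally show ?thesis unfolding P_def[symmetric] a_def[symmetric] by (simp add: algebra_simps)
qed


definition Sm :: "nat \<Rightarrow> real \<Rightarrow> real \<Rightarrow> real \<Rightarrow> real" where
  "Sm m x y k = (\<Sum>w\<in>signed_perms m. of_nat (wexc m w) * fw m x y k w)"

lemma F_rec:
  fixes x y k :: real
  shows "F_poly (Suc m) x y k = (x + y + 2*k*of_nat m*x) * F_poly m x y k + 2*k*(y-x) * Sm m x y k"
proof -
  have "F_poly (Suc m) x y k = (\<Sum>w\<in>signed_perms (Suc m). fw (Suc m) x y k w)" by (rule F_poly_fw)
  also have "\<dots> = (\<Sum>we\<in>signed_perms m \<times> Ext m. fw (Suc m) x y k ((\<lambda>(w, e). ins m w e) we))"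
    by (rule sum.reindex_bij_betw[OF ins_bij, symmetric])
  also have "\<dots> = (\<Sum>w\<in>signed_perms m. \<Sum>e\<in>Ext m. fw (Suc m) x y k (ins m w e))"
    unfolding sum.cartesian_product by (simp add: case_prod_beta')
  also have "\<dots> = (\<Sum>w\<in>signed_perms m. (x + y + 2*k*of_nat m*x) * fw m x y k w + 2*k*(y-x) * (of_nat (wexc m w) * fw m x y k w))"
    by (intro sum.cong refl) (rule per_w)
  also have "\<dots> = (x + y + 2*k*of_nat m*x) * F_poly m x y k + 2*k*(y-x) * Sm m x y k"
    unfolding F_poly_fw Sm_def by (simp add: sum.distrib sum_distrib_left)
  finally show ?thesis .
qed

lemma F_deriv:
  fixes x y k :: real
  shows "((\<lambda>x. F_poly m x y k) has_real_derivative
      (\<Sum>w\<in>signed_perms m. of_nat (wexc m w) * x^(wexc m w - 1) * y ^ (m - wexc m w) * k ^ (m - cyc m w))) (at x)"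
  unfolding F_poly_fw[abs_def] fw_def
  by (auto intro!: derivative_eq_intros sum.cong)

lemma Sm_deriv:
  fixes x y k :: real
  shows "Sm m x y k = x * (\<Sum>w\<in>signed_perms m. of_nat (wexc m w) * x^(wexc m w - 1) * y ^ (m - wexc m w) * k ^ (m - cyc m w))"
  unfolding Sm_def fw_def sum_distrib_left
proof (intro sum.cong refl)
  fix w
  show "of_nat (wexc m w) * (x ^ wexc m w * y ^ (m - wexc m w) * k ^ (m - cyc m w)) =
    x * (of_nat (wexc m w) * x ^ (wexc m w - 1) * y ^ (m - wexc m w) * k ^ (m - cyc m w))"
    by (cases "wexc m w") (simp_all add: algebra_simps)
qed

lemma sp_0: "signed_perms 0 = {\<lambda>i. i}"
proof -
  have pm0: "pm_set 0 = {}" unfolding pm_set_def by auto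
  show ?thesis unfolding signed_perms_def pm0 by (auto simp: fun_eq_iff bij_betw_def)
qed

lemma F_eq_Mp:
  fixes x y k :: real
  assumes kpos: "k > 0"
  shows "F_poly n x y k = Mp k y n x"
proof (induction n arbitrary: x)
  case 0
  show ?case unfolding F_poly_def sp_0 Mp_def by (simp add: wexc_def aexc_def cyc_def Uc_0)
next
  case (Suc m)
  have fe: "(\<lambda>x. F_poly m x y k) = Mp k y m" using Suc by (simp add: fun_eq_iff)
  define D where "D = (\<Sum>w\<in>signed_perms m. of_nat (wexc m w) * x^(wexc m w - 1) * y ^ (m - wexc m w) * k ^ (m - cyc m w))"
  have d1: "(Mp k y m has_real_derivative D) (at x)" using F_deriv[of m y k x] unfolding fe D_def .
  have "D = Md k y m x" using DERIV_unique[OF d1 Mp_deriv] .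
  then have "Sm m x y k = x * Md k y m x" using Sm_deriv unfolding D_def by simp
  then show ?case unfolding F_rec Mp_step[OF kpos] Suc by simp
qed

theorem lemma4:
  fixes x y k :: real
  assumes "k > 0" and "x \<noteq> y"
  shows "Abs_fps (\<lambda>n. F_poly n x y k / fact n)
       = fps_powr1
           (fps_const (y - x) * fps_exp (k * (y - x))
              / (fps_const y - fps_const x * fps_exp (2 * k * (y - x))))
           (1 / k)"
proof -
  have "fps_powr1
           (fps_const (y - x) * fps_exp (k * (y - x))
              / (fps_const y - fps_const x * fps_exp (2 * k * (y - x))))
           (1 / k) = fps_exp (y - x) * (fps_binomial (-(1/k)) oo (fps_const (-x/(y-x)) * (fps_exp (2*k*(y-x)) - 1)))"
    unfolding fps_powr1_def by (rule RHS_eq_Phi[OF assms])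
  also have "\<dots> = Abs_fps (\<lambda>n. F_poly n x y k / fact n)"
  proof (rule fps_ext)
    fix n
    show "(fps_exp (y - x) * (fps_binomial (-(1/k)) oo (fps_const (-x/(y-x)) * (fps_exp (2*k*(y-x)) - 1)))) $ n
        = Abs_fps (\<lambda>n. F_poly n x y k / fact n) $ n"
      using Phi_nth[OF assms(2), of k n] F_eq_Mp[OF assms(1)] by simp
  qed
  finally show ?thesis by simp
qed


end
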